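(* Let $p$ be a stochastic choice function on $X$ and let $M\in\mathcal N$. The following are equivalent: (i) for every MSC $\langle Q,\nu\rangle$ rationalizing $p$, the matrix $Q(M)$ is reversible on $M$; (iii) every cycle on every subset $M'\subseteq M$ that is sign-consistent with respect to $p(\cdot,M)$ satisfies $\delta_{kl}(M)=0$ for all its pairs $(k,l)$; equivalently, there is no subset $M'\subseteq M$ and cycle on $M'$ such that $\delta_{kl}(M)>0$ for all pairs $(k,l)$ of the cycle, nor one such that $\delta_{kl}(M)<0$ for all its pairs.
   Context: $X$ is a finite set of alternatives; a menu is a nonempty subset of $X$, and $\mathcal N$ denotes the set of all menus. A stochastic choice function is a map $p:X\times\mathcal N\to[0,1]$ with $\sum_{i\in M}p(i,M)=1$ and $p(i,M)=0$ for $i\notin M$; $p(\cdot,M)$ denotes the row vector $(p(i,M))_{i\in M}$. For $M\in\mathcal N$ and $i,j\in M$ let $\delta_{ij}(M)=p(i,M)\,p(j,\{i,j\})-p(i,\{i,j\})\,p(j,M)$. An MSC (Markov stochastic choice model) $\langle Q,\nu\rangle$ consists of, for every menu $M$, a matrix $Q(M)=(q_{ij}(M))_{i,j\in M}$ with nonnegative entries and a probability distribution $\nu_M$ on $M$, such that for all $M\in\mathcal N$ and distinct $i,j\in M$: (A1) $q_{ii}(M)=1-\sum_{k\neq i}q_{ik}(M)>0$; (A2) if $q_{ij}(\{i,j\})=0$ then $q_{ji}(\{i,j\})>0$; (A3) $q_{ij}(\{i,j\})\,q_{ji}(M)=q_{ji}(\{i,j\})\,q_{ij}(M)$. For a right stochastic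 matrix $Q$ on $M$ and a distribution $\nu$ on $M$ define $\rho(\nu,Q)=\lim_{\alpha\to0^+}\sum_{t\ge0}\alpha(1-\alpha)^t\nu Q^t$ (the limit exists and satisfies $\rho(\nu,Q)(I-Q)=0$). $p$ is rationalized by the MSC $\langle Q,\nu\rangle$ if $p(\cdot,M)=\rho(\nu_M,Q(M))$ for every $M\in\mathcal N$. $Q(M)$ is reversible on $M$ (for the model $\langle Q,\nu\rangle$) if, with $\rho=\rho(\nu_M,Q(M))$, the detailed balance equations $q_{ji}(M)\rho_j=\rho_i\,q_{ij}(M)$ hold for all $i,j\in M$. A cycle on a set $M'=\{i_1,\dots,i_n\}$ (elements listed in some order, distinct) is the set of ordered pairs $\{(i_1,i_2),(i_2,i_3),\dots,(i_{n-1},i_n),(i_n,i_1)\}$. A cycle on $M'\subseteq M$ is sign-consistent with respect to $p(\cdot,M)$ if $\operatorname{sgn}\delta_{ij}(M)=\operatorname{sgn}\delta_{kl}(M)$ for all pairs $(i,j),(k,l)$ in the cycle. *)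

theory Defs
  imports Complex_Main
begin

definition menu :: "'a set \<Rightarrow> 'a set \<Rightarrow> bool" where
  "menu X M \<longleftrightarrow> M \<noteq> {} \<and> M \<subseteq> X"

definition stoch_choice :: "'a set \<Rightarrow> ('a \<Rightarrow> 'a set \<Rightarrow> real) \<Rightarrow> bool" where
  "stoch_choice X p \<longleftrightarrow>
     (\<forall>M. menu X M \<longrightarrow>
        (\<forall>i\<in>X. 0 \<le> p i M \<and> p i M \<le> 1) \<and>
        (\<Sum>i\<in>M. p i M) = 1 \<and>
        (\<forall>i\<in>X. i \<notin> M \<longrightarrow> p i M = 0))"

definition delta :: "('a \<Rightarrow> 'a set \<Rightarrow> real) \<Rightarrow> 'a set \<Rightarrow> 'a \<Rightarrow> 'a \<Rightarrow> real" where
  "delta p M i j = p i M * p j {i, j} - p i {i, j} * p j M"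

fun mpow :: "'a set \<Rightarrow> ('a \<Rightarrow> 'a \<Rightarrow> real) \<Rightarrow> nat \<Rightarrow> 'a \<Rightarrow> 'a \<Rightarrow> real" where
  "mpow M Q 0 = (\<lambda>i j. if i = j then 1 else 0)"
| "mpow M Q (Suc t) = (\<lambda>i j. \<Sum>k\<in>M. mpow M Q t i k * Q k j)"

definition vecmat_pow :: "'a set \<Rightarrow> ('a \<Rightarrow> real) \<Rightarrow> ('a \<Rightarrow> 'a \<Rightarrow> real) \<Rightarrow> nat \<Rightarrow> 'a \<Rightarrow> real" where
  "vecmat_pow M \<nu> Q t j = (\<Sum>i\<in>M. \<nu> i * mpow M Q t i j)"

definition rho :: "'a set \<Rightarrow> ('a \<Rightarrow> real) \<Rightarrow> ('a \<Rightarrow> 'a \<Rightarrow> real) \<Rightarrow> 'a \<Rightarrow> real" where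
  "rho M \<nu> Q j =
     Lim (at_right (0::real)) (\<lambda>\<alpha>. \<Sum>t. \<alpha> * (1 - \<alpha>) ^ t * vecmat_pow M \<nu> Q t j)"

text \<open>Markov stochastic choice model <Q, nu>: Q M i j = q_ij(M), nu M i = nu_M(i).\<close>
definition MSC :: "'a set \<Rightarrow> ('a set \<Rightarrow> 'a \<Rightarrow> 'a \<Rightarrow> real) \<Rightarrow> ('a set \<Rightarrow> 'a \<Rightarrow> real) \<Rightarrow> bool" where
  "MSC X Q \<nu> \<longleftrightarrow>
     (\<forall>M. menu X M \<longrightarrow>
        (\<forall>i\<in>M. \<forall>j\<in>M. 0 \<le> Q M i j) \<and>
        (\<forall>i\<in>M. 0 \<le> \<nu> M i) \<and> (\<Sum>i\<in>M. \<nu> M i) = 1 \<and>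
        (\<forall>i\<in>M. Q M i i = 1 - (\<Sum>k\<in>M - {i}. Q M i k) \<and> Q M i i > 0) \<and>
        (\<forall>i\<in>M. \<forall>j\<in>M. i \<noteq> j \<longrightarrow>
           (Q {i, j} i j = 0 \<longrightarrow> Q {i, j} j i > 0) \<and>
           Q {i, j} i j * Q M j i = Q {i, j} j i * Q M i j))"

definition rationalizes ::
  "'a set \<Rightarrow> ('a \<Rightarrow> 'a set \<Rightarrow> real) \<Rightarrow> ('a set \<Rightarrow> 'a \<Rightarrow> 'a \<Rightarrow> real) \<Rightarrow> ('a set \<Rightarrow> 'a \<Rightarrow> real) \<Rightarrow> bool" where
  "rationalizes X p Q \<nu> \<longleftrightarrow>
     (\<forall>M. menu X M \<longrightarrow> (\<forall>j\<in>M. p j M = rho M (\<nu> M) (Q M) j))"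

definition reversible ::
  "'a set \<Rightarrow> ('a set \<Rightarrow> 'a \<Rightarrow> 'a \<Rightarrow> real) \<Rightarrow> ('a set \<Rightarrow> 'a \<Rightarrow> real) \<Rightarrow> bool" where
  "reversible M Q \<nu> \<longleftrightarrow>
     (\<forall>i\<in>M. \<forall>j\<in>M. Q M j i * rho M (\<nu> M) (Q M) j = rho M (\<nu> M) (Q M) i * Q M i j)"

text \<open>A cycle on M' = {i_1,...,i_n} is given by a nonempty distinct list [i_1,...,i_n];
  its pairs are (i_1,i_2),...,(i_{n-1},i_n),(i_n,i_1).\<close>
definition cycle_pairs :: "'a list \<Rightarrow> ('a \<times> 'a) set" where
  "cycle_pairs xs = set (zip xs (tl xs @ [hd xs]))"

definition sign_consistent :: "('a \<Rightarrow> 'a set \<Rightarrow> real) \<Rightarrow> 'a set \<Rightarrow> 'a list \<Rightarrow> bool" where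
  "sign_consistent p M xs \<longleftrightarrow>
     (\<forall>(i, j)\<in>cycle_pairs xs. \<forall>(k, l)\<in>cycle_pairs xs.
        sgn (delta p M i j) = sgn (delta p M k l))"

end

theory Submission
  imports Defs
begin


lemma finite_subseq_conv:
  fixes x :: "nat \<Rightarrow> 'i \<Rightarrow> real"
  assumes "finite I" and "\<forall>n. \<forall>i\<in>I. \<bar>x n i\<bar> \<le> B"
  shows "\<exists>r L. strict_mono r \<and> (\<forall>i\<in>I. (\<lambda>n. x (r n) i) \<longlonglongrightarrow> L i)"
  using assms
proof (induction I rule: finite_induct)
  case empty
  show ?case using strict_mono_id by blast
next
  case (insert i I)
  then obtain r L where r: "strict_mono r" "\<forall>j\<in>I. (\<lambda>n. x (r n) j) \<longlonglongrightarrow> L j" by auto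
  obtain f where f: "strict_mono f" "monoseq (\<lambda>n. x (r (f n)) i)"
    using seq_monosub[of "\<lambda>n. x (r n) i"] by blast
  have "Bseq (\<lambda>n. x (r (f n)) i)"
    by (rule BseqI'[where K=B]) (use insert.prems in auto)
  then have "convergent (\<lambda>n. x (r (f n)) i)" using f(2) Bseq_monoseq_convergent by blast
  then obtain l where l: "(\<lambda>n. x (r (f n)) i) \<longlonglongrightarrow> l" unfolding convergent_def by blast
  have "\<forall>j\<in>insert i I. (\<lambda>n. x ((r \<circ> f) n) j) \<longlonglongrightarrow> (L(i := l)) j"
  proof
    fix j assume j: "j \<in> insert i I"
    show "(\<lambda>n. x ((r \<circ> f) n) j) \<longlonglongrightarrow> (L(i := l)) j"
    proof (cases "j = i")
      case True then show ?thesis using l by simp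
    next
      case False
      then have "j \<in> I" using j by simp
      then have "((\<lambda>n. x (r n) j) \<circ> f) \<longlonglongrightarrow> L j" using r(2) f(1) LIMSEQ_subseq_LIMSEQ by blast
      then show ?thesis using False by (simp add: comp_def)
    qed
  qed
  then show ?case using strict_mono_o[OF r(1) f(1)] by blast
qed

context
  fixes M :: "'a set" and Q :: "'a \<Rightarrow> 'a \<Rightarrow> real"
  assumes finM: "finite M"
    and Qnn: "\<And>i j. i \<in> M \<Longrightarrow> j \<in> M \<Longrightarrow> 0 \<le> Q i j"
    and Qrow: "\<And>i. i \<in> M \<Longrightarrow> (\<Sum>j\<in>M. Q i j) = 1"
begin

lemma mpow_props:
  "i \<in> M \<Longrightarrow> (\<forall>j\<in>M. 0 \<le> mpow M Q t i j) \<and> (\<Sum>j\<in>M. mpow M Q t i j) = 1"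
proof (induction t arbitrary: i)
  case 0
  then show ?case using finM by (simp add: sum.delta)
next
  case (Suc t)
  have nn: "\<forall>j\<in>M. 0 \<le> mpow M Q (Suc t) i j"
    using Suc by (auto intro!: sum_nonneg mult_nonneg_nonneg Qnn)
  have "(\<Sum>j\<in>M. mpow M Q (Suc t) i j) = (\<Sum>k\<in>M. mpow M Q t i k * (\<Sum>j\<in>M. Q k j))"
    by (simp only: mpow.simps sum_distrib_left) (rule sum.swap)
  also have "\<dots> = (\<Sum>k\<in>M. mpow M Q t i k)" by (simp add: Qrow)
  also have "\<dots> = 1" using Suc by simp
  finally show ?case using nn by simp
qed

lemma mpow_nn: "i \<in> M \<Longrightarrow> j \<in> M \<Longrightarrow> 0 \<le> mpow M Q t i j"
  using mpow_props by blast

lemma mpow_le1: "i \<in> M \<Longrightarrow> j \<in> M \<Longrightarrow> mpow M Q t i j \<le> 1"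
proof -
  assume a: "i \<in> M" "j \<in> M"
  have "mpow M Q t i j \<le> (\<Sum>k\<in>M. mpow M Q t i k)"
    using a finM mpow_nn by (intro member_le_sum) auto
  then show ?thesis using mpow_props[OF a(1)] by simp
qed

lemma mpow_left: "\<forall>i\<in>M. \<forall>j\<in>M. mpow M Q (Suc t) i j = (\<Sum>k\<in>M. Q i k * mpow M Q t k j)"
proof (induction t)
  case 0
  show ?case
  proof (intro ballI)
    fix i j assume ij: "i \<in> M" "j \<in> M"
    have "mpow M Q (Suc 0) i j = (\<Sum>k\<in>M. (if i = k then Q k j else 0))"
      unfolding mpow.simps by (intro sum.cong) auto
    also have "\<dots> = Q i j" using ij finM by simp
    also have "\<dots> = (\<Sum>k\<in>M. (if k = j then Q i k else 0))" using ij finM by simp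
    also have "\<dots> = (\<Sum>k\<in>M. Q i k * mpow M Q 0 k j)" by (intro sum.cong) auto
    finally show "mpow M Q (Suc 0) i j = (\<Sum>k\<in>M. Q i k * mpow M Q 0 k j)" .
  qed
next
  case (Suc t)
  show ?case
  proof (intro ballI)
    fix i j assume ij: "i \<in> M" "j \<in> M"
    have "mpow M Q (Suc (Suc t)) i j = (\<Sum>k\<in>M. mpow M Q (Suc t) i k * Q k j)" by simp
    also have "\<dots> = (\<Sum>k\<in>M. (\<Sum>l\<in>M. Q i l * mpow M Q t l k) * Q k j)"
      using Suc ij by (intro sum.cong) auto
    also have "\<dots> = (\<Sum>l\<in>M. Q i l * (\<Sum>k\<in>M. mpow M Q t l k * Q k j))"
      by (simp add: sum_distrib_left sum_distrib_right mult.assoc) (rule sum.swap)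
    also have "\<dots> = (\<Sum>l\<in>M. Q i l * mpow M Q (Suc t) l j)" by simp
    finally show "mpow M Q (Suc (Suc t)) i j = (\<Sum>k\<in>M. Q i k * mpow M Q (Suc t) k j)" .
  qed
qed

definition wt :: "real \<Rightarrow> nat \<Rightarrow> real" where "wt a t = a * (1 - a) ^ t"

lemma wt_sums: "0 < a \<Longrightarrow> a < 1 \<Longrightarrow> wt a sums 1"
proof -
  assume a: "0 < a" "a < 1"
  have "(\<lambda>t. (1 - a) ^ t) sums (1 / (1 - (1 - a)))" using a by (intro geometric_sums) auto
  then have "(\<lambda>t. a * (1 - a) ^ t) sums (a * (1 / (1 - (1 - a))))" by (rule sums_mult)
  then show ?thesis using a by (simp add: wt_def[abs_def])
qed

lemma wt_nn: "0 < a \<Longrightarrow> a < 1 \<Longrightarrow> 0 \<le> wt a t"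
  by (simp add: wt_def)

lemma summable_wt_bdd:
  assumes "0 < a" "a < 1" "\<And>t. \<bar>f t\<bar> \<le> B"
  shows "summable (\<lambda>t. wt a t * f t)"
proof (rule summable_comparison_test'[where g="\<lambda>t. wt a t * B" and N=0])
  show "summable (\<lambda>t. wt a t * B)" using wt_sums[OF assms(1,2)] summable_mult2 sums_summable by blast
  fix n show "norm (wt a n * f n) \<le> wt a n * B"
    using assms wt_nn[OF assms(1,2)] by (simp add: abs_mult mult_left_mono)
qed

definition TT :: "real \<Rightarrow> 'a \<Rightarrow> 'a \<Rightarrow> real" where
  "TT a i j = (\<Sum>t. wt a t * mpow M Q t i j)"

lemma summ_T: "0 < a \<Longrightarrow> a < 1 \<Longrightarrow> i \<in> M \<Longrightarrow> j \<in> M \<Longrightarrow> summable (\<lambda>t. wt a t * mpow M Q t i j)"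
  by (rule summable_wt_bdd[where B=1]) (use mpow_nn mpow_le1 in auto)

lemma TT_bounds: "0 < a \<Longrightarrow> a < 1 \<Longrightarrow> i \<in> M \<Longrightarrow> j \<in> M \<Longrightarrow> 0 \<le> TT a i j \<and> TT a i j \<le> 1"
proof -
  assume as: "0 < a" "a < 1" "i \<in> M" "j \<in> M"
  have s: "summable (\<lambda>t. wt a t * mpow M Q t i j)" using summ_T as by blast
  have "0 \<le> TT a i j" unfolding TT_def
    using as by (intro suminf_nonneg[OF s] mult_nonneg_nonneg wt_nn mpow_nn) auto
  moreover have "TT a i j \<le> suminf (wt a)" unfolding TT_def
  proof (rule suminf_le[OF _ s])
    show "summable (wt a)" using sums_summable[OF wt_sums[OF as(1,2)]] .
    fix t show "wt a t * mpow M Q t i j \<le> wt a t"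
      using wt_nn[OF as(1,2)] mpow_le1[OF as(3,4)] by (intro mult_left_le) auto
  qed
  moreover have "suminf (wt a) = 1" using wt_sums[OF as(1,2)] sums_unique by metis
  ultimately show ?thesis by simp
qed

lemma TT_sum_right:
  assumes as: "0 < a" "a < 1" "i \<in> M" "\<forall>k\<in>M. \<forall>t. \<bar>X t k\<bar> \<le> B"
  shows "(\<Sum>t. wt a t * (\<Sum>k\<in>M. mpow M Q t i k * X t k))
        = (\<Sum>k\<in>M. (\<Sum>t. wt a t * mpow M Q t i k * X t k))"
proof -
  have "(\<Sum>t. wt a t * (\<Sum>k\<in>M. mpow M Q t i k * X t k)) = (\<Sum>t. \<Sum>k\<in>M. wt a t * mpow M Q t i k * X t k)"
    by (simp add: sum_distrib_left mult.assoc)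
  also have "\<dots> = (\<Sum>k\<in>M. (\<Sum>t. wt a t * mpow M Q t i k * X t k))"
  proof (rule suminf_sum)
    fix k assume k: "k \<in> M"
    show "summable (\<lambda>t. wt a t * mpow M Q t i k * X t k)"
      unfolding mult.assoc
    proof (rule summable_wt_bdd[OF as(1,2)])
      fix t
      have "\<bar>mpow M Q t i k\<bar> \<le> 1" using mpow_nn mpow_le1 as k by auto
      moreover have "\<bar>X t k\<bar> \<le> B" using as k by auto
      ultimately show "\<bar>mpow M Q t i k * X t k\<bar> \<le> 1 * B"
        unfolding abs_mult by (intro mult_mono) auto
    qed
  qed
  finally show ?thesis .
qed

lemma TT_shift_right:
  assumes as: "0 < a" "a < 1" "i \<in> M" "j \<in> M"
  shows "TT a i j = a * (if i = j then 1 else 0) + (1 - a) * (\<Sum>k\<in>M. TT a i k * Q k j)"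
proof -
  have s: "summable (\<lambda>t. wt a t * mpow M Q t i j)" using summ_T as by blast
  have "TT a i j = wt a 0 * mpow M Q 0 i j + (\<Sum>t. wt a (Suc t) * mpow M Q (Suc t) i j)"
    unfolding TT_def using suminf_split_head[OF s] by simp
  also have "(\<Sum>t. wt a (Suc t) * mpow M Q (Suc t) i j)
      = (\<Sum>t. (1 - a) * (wt a t * (\<Sum>k\<in>M. mpow M Q t i k * Q k j)))"
    by (simp add: wt_def mult_ac)
  also have "\<dots> = (1 - a) * (\<Sum>t. wt a t * (\<Sum>k\<in>M. mpow M Q t i k * Q k j))"
  proof (rule suminf_mult)
    show "summable (\<lambda>t. wt a t * (\<Sum>k\<in>M. mpow M Q t i k * Q k j))"
    proof (rule summable_wt_bdd[OF as(1,2), where B=1])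
      fix t
      have "\<bar>(\<Sum>k\<in>M. mpow M Q t i k * Q k j)\<bar> = \<bar>mpow M Q (Suc t) i j\<bar>" by simp
      also have "\<dots> \<le> 1" using mpow_nn[OF as(3,4), of "Suc t"] mpow_le1[OF as(3,4), of "Suc t"] by linarith
      finally show "\<bar>(\<Sum>k\<in>M. mpow M Q t i k * Q k j)\<bar> \<le> 1" .
    qed
  qed
  also have "(\<Sum>t. wt a t * (\<Sum>k\<in>M. mpow M Q t i k * Q k j)) = (\<Sum>k\<in>M. (\<Sum>t. wt a t * mpow M Q t i k * Q k j))"
  proof (rule TT_sum_right[where B="\<Sum>k\<in>M. \<bar>Q k j\<bar>"])
    show "\<forall>k\<in>M. \<forall>t. \<bar>Q k j\<bar> \<le> (\<Sum>k\<in>M. \<bar>Q k j\<bar>)"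
      using finM by (auto intro: member_le_sum)
  qed (use as in auto)
  also have "\<dots> = (\<Sum>k\<in>M. TT a i k * Q k j)"
  proof (intro sum.cong refl)
    fix k assume "k \<in> M"
    then show "(\<Sum>t. wt a t * mpow M Q t i k * Q k j) = TT a i k * Q k j"
      unfolding TT_def using suminf_mult2[OF summ_T[OF as(1,2,3)]] by simp
  qed
  finally show ?thesis by (simp add: wt_def)
qed

lemma swap_wt:
  assumes as: "0 < a" "a < 1" "\<And>k t. k \<in> M \<Longrightarrow> \<bar>f t k\<bar> \<le> B"
  shows "(\<Sum>t. wt a t * (\<Sum>k\<in>M. c k * f t k)) = (\<Sum>k\<in>M. c k * (\<Sum>t. wt a t * f t k))"
proof -
  have "(\<Sum>t. wt a t * (\<Sum>k\<in>M. c k * f t k)) = (\<Sum>t. \<Sum>k\<in>M. c k * (wt a t * f t k))"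
    by (simp add: sum_distrib_left mult_ac)
  also have "\<dots> = (\<Sum>k\<in>M. \<Sum>t. c k * (wt a t * f t k))"
  proof (rule suminf_sum)
    fix k assume k: "k \<in> M"
    show "summable (\<lambda>t. c k * (wt a t * f t k))"
      by (rule summable_mult, rule summable_wt_bdd[OF as(1,2)], rule as(3)[OF k])
  qed
  also have "\<dots> = (\<Sum>k\<in>M. c k * (\<Sum>t. wt a t * f t k))"
  proof (intro sum.cong refl)
    fix k assume k: "k \<in> M"
    show "(\<Sum>t. c k * (wt a t * f t k)) = c k * (\<Sum>t. wt a t * f t k)"
      by (rule suminf_mult, rule summable_wt_bdd[OF as(1,2)], rule as(3)[OF k])
  qed
  finally show ?thesis .
qed

lemma TT_shift_left:
  assumes as: "0 < a" "a < 1" "i \<in> M" "j \<in> M"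
  shows "TT a i j = a * (if i = j then 1 else 0) + (1 - a) * (\<Sum>k\<in>M. Q i k * TT a k j)"
proof -
  have s: "summable (\<lambda>t. wt a t * mpow M Q t i j)" using summ_T as by blast
  have "TT a i j = wt a 0 * mpow M Q 0 i j + (\<Sum>t. wt a (Suc t) * mpow M Q (Suc t) i j)"
    unfolding TT_def using suminf_split_head[OF s] by simp
  also have "(\<Sum>t. wt a (Suc t) * mpow M Q (Suc t) i j)
      = (\<Sum>t. (1 - a) * (wt a t * (\<Sum>k\<in>M. Q i k * mpow M Q t k j)))"
    using mpow_left as by (simp add: wt_def mult_ac)
  also have "\<dots> = (1 - a) * (\<Sum>t. wt a t * (\<Sum>k\<in>M. Q i k * mpow M Q t k j))"
  proof (rule suminf_mult)
    show "summable (\<lambda>t. wt a t * (\<Sum>k\<in>M. Q i k * mpow M Q t k j))"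
    proof (rule summable_wt_bdd[OF as(1,2), where B=1])
      fix t
      have "\<bar>(\<Sum>k\<in>M. Q i k * mpow M Q t k j)\<bar> = \<bar>mpow M Q (Suc t) i j\<bar>" using mpow_left as by simp
      also have "\<dots> \<le> 1" using mpow_nn[OF as(3,4), of "Suc t"] mpow_le1[OF as(3,4), of "Suc t"] by linarith
      finally show "\<bar>(\<Sum>k\<in>M. Q i k * mpow M Q t k j)\<bar> \<le> 1" .
    qed
  qed
  also have "(\<Sum>t. wt a t * (\<Sum>k\<in>M. Q i k * mpow M Q t k j)) = (\<Sum>k\<in>M. Q i k * TT a k j)"
    unfolding TT_def
    by (rule swap_wt[OF as(1,2), where B=1]) (use mpow_nn mpow_le1 as in \<open>auto simp: abs_le_iff\<close>)
  finally show ?thesis by (simp add: wt_def)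
qed

lemma mpow_fix_left:
  assumes X: "\<forall>i\<in>M. \<forall>j\<in>M. (\<Sum>k\<in>M. Q i k * X k j) = X i j"
  shows "\<forall>i\<in>M. \<forall>j\<in>M. (\<Sum>k\<in>M. mpow M Q t i k * X k j) = X i j"
proof (induction t)
  case 0
  show ?case
  proof (intro ballI)
    fix i j assume ij: "i \<in> M" "j \<in> M"
    have "(\<Sum>k\<in>M. mpow M Q 0 i k * X k j) = (\<Sum>k\<in>M. if k = i then X k j else 0)"
      by (intro sum.cong) auto
    then show "(\<Sum>k\<in>M. mpow M Q 0 i k * X k j) = X i j" using ij finM by simp
  qed
next
  case (Suc t)
  show ?case
  proof (intro ballI)
    fix i j assume ij: "i \<in> M" "j \<in> M"
    have "(\<Sum>k\<in>M. mpow M Q (Suc t) i k * X k j) = (\<Sum>k\<in>M. \<Sum>l\<in>M. mpow M Q t i l * Q l k * X k j)"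
      by (simp add: sum_distrib_right)
    also have "\<dots> = (\<Sum>l\<in>M. \<Sum>k\<in>M. mpow M Q t i l * Q l k * X k j)" by (rule sum.swap)
    also have "\<dots> = (\<Sum>l\<in>M. mpow M Q t i l * (\<Sum>k\<in>M. Q l k * X k j))"
      by (simp add: sum_distrib_left mult.assoc)
    also have "\<dots> = (\<Sum>l\<in>M. mpow M Q t i l * X l j)" using X ij by simp
    also have "\<dots> = X i j" using Suc ij by simp
    finally show "(\<Sum>k\<in>M. mpow M Q (Suc t) i k * X k j) = X i j" .
  qed
qed

lemma mpow_fix_right:
  assumes X: "\<forall>i\<in>M. \<forall>j\<in>M. (\<Sum>k\<in>M. X i k * Q k j) = X i j"
  shows "\<forall>i\<in>M. \<forall>j\<in>M. (\<Sum>k\<in>M. X i k * mpow M Q t k j) = X i j"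
proof (induction t)
  case 0
  show ?case
  proof (intro ballI)
    fix i j assume ij: "i \<in> M" "j \<in> M"
    have "(\<Sum>k\<in>M. X i k * mpow M Q 0 k j) = (\<Sum>k\<in>M. if k = j then X i k else 0)"
      by (intro sum.cong) auto
    then show "(\<Sum>k\<in>M. X i k * mpow M Q 0 k j) = X i j" using ij finM by simp
  qed
next
  case (Suc t)
  show ?case
  proof (intro ballI)
    fix i j assume ij: "i \<in> M" "j \<in> M"
    have "(\<Sum>k\<in>M. X i k * mpow M Q (Suc t) k j) = (\<Sum>k\<in>M. \<Sum>l\<in>M. X i k * Q k l * mpow M Q t l j)"
      using mpow_left ij by (simp add: sum_distrib_left mult.assoc)
    also have "\<dots> = (\<Sum>l\<in>M. \<Sum>k\<in>M. X i k * Q k l * mpow M Q t l j)" by (rule sum.swap)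
    also have "\<dots> = (\<Sum>l\<in>M. (\<Sum>k\<in>M. X i k * Q k l) * mpow M Q t l j)"
      by (simp add: sum_distrib_right)
    also have "\<dots> = (\<Sum>l\<in>M. X i l * mpow M Q t l j)" using X ij by simp
    also have "\<dots> = X i j" using Suc ij by simp
    finally show "(\<Sum>k\<in>M. X i k * mpow M Q (Suc t) k j) = X i j" .
  qed
qed

lemma wt_suminf_const: "0 < a \<Longrightarrow> a < 1 \<Longrightarrow> (\<Sum>t. wt a t * c) = c"
  using sums_unique[OF sums_mult2[OF wt_sums, of a c]] by simp

lemma TT_fix_left:
  assumes as: "0 < a" "a < 1" "i \<in> M" "j \<in> M"
    and X: "\<forall>i\<in>M. \<forall>j\<in>M. (\<Sum>k\<in>M. Q i k * X k j) = X i j"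
  shows "(\<Sum>k\<in>M. TT a i k * X k j) = X i j"
proof -
  have "(\<Sum>k\<in>M. TT a i k * X k j) = (\<Sum>k\<in>M. X k j * (\<Sum>t. wt a t * mpow M Q t i k))"
    unfolding TT_def by (simp add: mult.commute)
  also have "\<dots> = (\<Sum>t. wt a t * (\<Sum>k\<in>M. X k j * mpow M Q t i k))"
    by (rule swap_wt[OF as(1,2), where B=1, symmetric]) (use mpow_nn mpow_le1 as in \<open>auto simp: abs_le_iff\<close>)
  also have "\<dots> = (\<Sum>t. wt a t * X i j)"
    using mpow_fix_left[OF X] as by (simp add: mult.commute)
  also have "\<dots> = X i j" using wt_suminf_const as by simp
  finally show ?thesis .
qed

lemma TT_fix_right:
  assumes as: "0 < a" "a < 1" "i \<in> M" "j \<in> M"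
    and X: "\<forall>i\<in>M. \<forall>j\<in>M. (\<Sum>k\<in>M. X i k * Q k j) = X i j"
  shows "(\<Sum>k\<in>M. X i k * TT a k j) = X i j"
proof -
  have "(\<Sum>k\<in>M. X i k * TT a k j) = (\<Sum>k\<in>M. X i k * (\<Sum>t. wt a t * mpow M Q t k j))"
    unfolding TT_def by simp
  also have "\<dots> = (\<Sum>t. wt a t * (\<Sum>k\<in>M. X i k * mpow M Q t k j))"
    by (rule swap_wt[OF as(1,2), where B=1, symmetric]) (use mpow_nn mpow_le1 as in \<open>auto simp: abs_le_iff\<close>)
  also have "\<dots> = (\<Sum>t. wt a t * X i j)"
    using mpow_fix_right[OF X] as by simp
  also have "\<dots> = X i j" using wt_suminf_const as by simp
  finally show ?thesis .
qed

definition clus :: "(nat \<Rightarrow> real) \<Rightarrow> ('a \<Rightarrow> 'a \<Rightarrow> real) \<Rightarrow> bool" where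
  "clus a P \<longleftrightarrow> (\<forall>n. 0 < a n \<and> a n < 1) \<and> a \<longlonglongrightarrow> 0 \<and>
     (\<forall>i\<in>M. \<forall>j\<in>M. (\<lambda>n. TT (a n) i j) \<longlonglongrightarrow> P i j)"

lemma clus_props:
  assumes c: "clus a P"
  shows "\<forall>i\<in>M. \<forall>j\<in>M. (\<Sum>k\<in>M. P i k * Q k j) = P i j"
    and "\<forall>i\<in>M. \<forall>j\<in>M. (\<Sum>k\<in>M. Q i k * P k j) = P i j"
proof -
  have a: "\<And>n. 0 < a n" "\<And>n. a n < 1" "a \<longlonglongrightarrow> 0" and l: "\<forall>i\<in>M. \<forall>j\<in>M. (\<lambda>n. TT (a n) i j) \<longlonglongrightarrow> P i j"
    using c unfolding clus_def by auto
  show "\<forall>i\<in>M. \<forall>j\<in>M. (\<Sum>k\<in>M. P i k * Q k j) = P i j"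
  proof (intro ballI)
    fix i j assume ij: "i \<in> M" "j \<in> M"
    have e: "(\<lambda>n. TT (a n) i j) = (\<lambda>n. a n * (if i = j then 1 else 0) + (1 - a n) * (\<Sum>k\<in>M. TT (a n) i k * Q k j))"
      using TT_shift_right a ij by blast
    have "(\<lambda>n. a n * (if i = j then 1 else 0) + (1 - a n) * (\<Sum>k\<in>M. TT (a n) i k * Q k j))
        \<longlonglongrightarrow> 0 * (if i = j then 1 else 0) + (1 - 0) * (\<Sum>k\<in>M. P i k * Q k j)"
      using l ij a(3) by (intro tendsto_intros) auto
    then have "(\<lambda>n. TT (a n) i j) \<longlonglongrightarrow> (\<Sum>k\<in>M. P i k * Q k j)" using e by simp
    then show "(\<Sum>k\<in>M. P i k * Q k j) = P i j" using l ij LIMSEQ_unique by blast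
  qed
  show "\<forall>i\<in>M. \<forall>j\<in>M. (\<Sum>k\<in>M. Q i k * P k j) = P i j"
  proof (intro ballI)
    fix i j assume ij: "i \<in> M" "j \<in> M"
    have e: "(\<lambda>n. TT (a n) i j) = (\<lambda>n. a n * (if i = j then 1 else 0) + (1 - a n) * (\<Sum>k\<in>M. Q i k * TT (a n) k j))"
      using TT_shift_left a ij by blast
    have "(\<lambda>n. a n * (if i = j then 1 else 0) + (1 - a n) * (\<Sum>k\<in>M. Q i k * TT (a n) k j))
        \<longlonglongrightarrow> 0 * (if i = j then 1 else 0) + (1 - 0) * (\<Sum>k\<in>M. Q i k * P k j)"
      using l ij a(3) by (intro tendsto_intros) auto
    then have "(\<lambda>n. TT (a n) i j) \<longlonglongrightarrow> (\<Sum>k\<in>M. Q i k * P k j)" using e by simp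
    then show "(\<Sum>k\<in>M. Q i k * P k j) = P i j" using l ij LIMSEQ_unique by blast
  qed
qed

lemma clus_unique:
  assumes c1: "clus a P" and c2: "clus b P'" and ij: "i \<in> M" "j \<in> M"
  shows "P i j = P' i j"
proof -
  have a: "\<And>n. 0 < a n" "\<And>n. a n < 1" and la: "\<forall>i\<in>M. \<forall>j\<in>M. (\<lambda>n. TT (a n) i j) \<longlonglongrightarrow> P i j"
    using c1 unfolding clus_def by auto
  have b: "\<And>n. 0 < b n" "\<And>n. b n < 1" and lb: "\<forall>i\<in>M. \<forall>j\<in>M. (\<lambda>n. TT (b n) i j) \<longlonglongrightarrow> P' i j"
    using c2 unfolding clus_def by auto
  have e1: "\<And>n. (\<Sum>k\<in>M. TT (a n) i k * P' k j) = P' i j"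
    using TT_fix_left[OF a(1) a(2) ij clus_props(2)[OF c2]] .
  have "(\<lambda>n. (\<Sum>k\<in>M. TT (a n) i k * P' k j)) \<longlonglongrightarrow> (\<Sum>k\<in>M. P i k * P' k j)"
    using la ij by (intro tendsto_intros) auto
  then have 1: "(\<Sum>k\<in>M. P i k * P' k j) = P' i j" using e1 by (simp add: LIMSEQ_const_iff)
  have e2: "\<And>n. (\<Sum>k\<in>M. P i k * TT (b n) k j) = P i j"
    using TT_fix_right[OF b(1) b(2) ij clus_props(1)[OF c1]] .
  have "(\<lambda>n. (\<Sum>k\<in>M. P i k * TT (b n) k j)) \<longlonglongrightarrow> (\<Sum>k\<in>M. P i k * P' k j)"
    using lb ij by (intro tendsto_intros) auto
  then have 2: "(\<Sum>k\<in>M. P i k * P' k j) = P i j" using e2 by (simp add: LIMSEQ_const_iff)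
  show ?thesis using 1 2 by simp
qed

lemma clus_exists:
  assumes a: "\<And>n. 0 < a n" "\<And>n. a n < 1" "a \<longlonglongrightarrow> 0"
  shows "\<exists>r P. strict_mono r \<and> clus (a \<circ> r) P"
proof -
  obtain r L where r: "strict_mono r" "\<forall>ij\<in>M \<times> M. (\<lambda>n. (\<lambda>n ij. TT (a n) (fst ij) (snd ij)) (r n) ij) \<longlonglongrightarrow> L ij"
    using finite_subseq_conv[of "M \<times> M" "\<lambda>n ij. TT (a n) (fst ij) (snd ij)" 1] finM TT_bounds a
    by fastforce
  have "clus (a \<circ> r) (\<lambda>i j. L (i, j))"
    unfolding clus_def
  proof (intro conjI allI ballI)
    fix n show "0 < (a \<circ> r) n" "(a \<circ> r) n < 1" using a by auto
    show "(a \<circ> r) \<longlonglongrightarrow> 0" using LIMSEQ_subseq_LIMSEQ[OF a(3) r(1)] .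
    fix i j assume "i \<in> M" "j \<in> M"
    then show "(\<lambda>n. TT ((a \<circ> r) n) i j) \<longlonglongrightarrow> L (i, j)" using r(2) by auto
  qed
  then show ?thesis using r(1) by blast
qed

lemma TT_converges: "\<exists>P. \<forall>i\<in>M. \<forall>j\<in>M. ((\<lambda>a. TT a i j) \<longlongrightarrow> P i j) (at_right 0)"
proof -
  define a0 where "a0 = (\<lambda>n::nat. inverse (real (Suc n)) / 2)"
  have a0: "\<And>n. 0 < a0 n" "\<And>n. a0 n < 1" "a0 \<longlonglongrightarrow> 0"
    proof -
      show "\<And>n. 0 < a0 n" "\<And>n. a0 n < 1" unfolding a0_def by (auto simp: field_simps)
      show "a0 \<longlonglongrightarrow> 0" unfolding a0_def by (rule tendsto_divide_zero[OF LIMSEQ_inverse_real_of_nat])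
    qed
  obtain r0 P0 where c0: "clus (a0 \<circ> r0) P0" using clus_exists[OF a0] by blast
  have "\<forall>i\<in>M. \<forall>j\<in>M. ((\<lambda>a. TT a i j) \<longlongrightarrow> P0 i j) (at_right 0)"
  proof (intro ballI)
    fix i j assume ij: "i \<in> M" "j \<in> M"
    show "((\<lambda>a. TT a i j) \<longlongrightarrow> P0 i j) (at_right 0)"
    proof (rule ccontr)
      assume "\<not> ?thesis"
      then obtain e where e: "e > 0" "\<not> eventually (\<lambda>a. dist (TT a i j) (P0 i j) < e) (at_right 0)"
        unfolding tendsto_iff by blast
      then have "\<forall>b>0. \<exists>y>0. y < b \<and> \<not> dist (TT y i j) (P0 i j) < e"
        unfolding eventually_at_right_field by auto
      then have "\<forall>n. \<exists>y>0. y < a0 n \<and> \<not> dist (TT y i j) (P0 i j) < e" using a0(1) by blast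
      then obtain a where a: "\<And>n. 0 < a n" "\<And>n. a n < a0 n" "\<And>n. \<not> dist (TT (a n) i j) (P0 i j) < e"
        by metis
      have a1: "\<And>n. a n < 1" using a(2) a0(2) less_trans by blast
      have al: "a \<longlonglongrightarrow> 0"
      proof (rule tendsto_sandwich[where f="\<lambda>_. 0" and h=a0])
        show "eventually (\<lambda>n. 0 \<le> a n) sequentially" using a(1) by (simp add: less_imp_le)
        show "eventually (\<lambda>n. a n \<le> a0 n) sequentially" using a(2) by (simp add: less_imp_le)
      qed (use a0 in auto)
      obtain r P where rP: "strict_mono r" "clus (a \<circ> r) P" using clus_exists[OF a(1) a1 al] by blast
      have "P i j = P0 i j" using clus_unique[OF rP(2) c0 ij] .
      moreover have "(\<lambda>n. TT ((a \<circ> r) n) i j) \<longlonglongrightarrow> P i j" using rP(2) ij unfolding clus_def by blast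
      ultimately have "(\<lambda>n. TT ((a \<circ> r) n) i j) \<longlonglongrightarrow> P0 i j" by simp
      from this e(1) have "eventually (\<lambda>n. dist (TT ((a \<circ> r) n) i j) (P0 i j) < e) sequentially"
        by (rule tendsto_iff[THEN iffD1, rule_format])
      then obtain N where "\<forall>n\<ge>N. dist (TT ((a \<circ> r) n) i j) (P0 i j) < e"
        unfolding eventually_sequentially by blast
      then have "dist (TT (a (r N)) i j) (P0 i j) < e" by simp
      then show False using a(3)[of "r N"] by blast
    qed
  qed
  then show ?thesis by blast
qed

lemma rho_stationary:
  assumes j: "j \<in> M"
  shows "(\<Sum>i\<in>M. rho M \<nu> Q i * Q i j) = rho M \<nu> Q j"
proof -
  obtain P where P: "\<forall>i\<in>M. \<forall>j\<in>M. ((\<lambda>a. TT a i j) \<longlongrightarrow> P i j) (at_right 0)"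
    using TT_converges by blast
  have Pst: "\<forall>i\<in>M. \<forall>j\<in>M. (\<Sum>k\<in>M. P i k * Q k j) = P i j"
  proof -
    define a0 where "a0 = (\<lambda>n::nat. inverse (real (Suc n)) / 2)"
    have a0: "\<And>n. 0 < a0 n" "\<And>n. a0 n < 1" "a0 \<longlonglongrightarrow> 0"
      proof -
      show "\<And>n. 0 < a0 n" "\<And>n. a0 n < 1" unfolding a0_def by (auto simp: field_simps)
      show "a0 \<longlonglongrightarrow> 0" unfolding a0_def by (rule tendsto_divide_zero[OF LIMSEQ_inverse_real_of_nat])
    qed
    have "clus a0 P" unfolding clus_def
    proof (intro conjI allI ballI)
      fix n show "0 < a0 n" "a0 n < 1" using a0 by auto
      show "a0 \<longlonglongrightarrow> 0" using a0(3) .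
      fix i j assume "i \<in> M" "j \<in> M"
      then have "((\<lambda>a. TT a i j) \<longlongrightarrow> P i j) (at_right 0)" using P by auto
      moreover have "filterlim a0 (at_right 0) sequentially"
        using a0 by (intro tendsto_imp_filterlim_at_right) auto
      ultimately show "(\<lambda>n. TT (a0 n) i j) \<longlonglongrightarrow> P i j" by (rule filterlim_compose)
    qed
    then show ?thesis using clus_props(1) by blast
  qed
  have rj: "rho M \<nu> Q j = (\<Sum>l\<in>M. \<nu> l * P l j)" if j: "j \<in> M" for j
  proof -
    have ev: "eventually (\<lambda>a. (\<Sum>t. a * (1 - a) ^ t * vecmat_pow M \<nu> Q t j) = (\<Sum>l\<in>M. \<nu> l * TT a l j)) (at_right 0)"
      unfolding eventually_at_right_field
    proof (intro exI[of _ 1] conjI allI impI)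
      fix a :: real assume a: "0 < a" "a < 1"
      have "(\<Sum>t. a * (1 - a) ^ t * vecmat_pow M \<nu> Q t j) = (\<Sum>t. wt a t * (\<Sum>l\<in>M. \<nu> l * mpow M Q t l j))"
        by (simp add: wt_def vecmat_pow_def)
      also have "\<dots> = (\<Sum>l\<in>M. \<nu> l * TT a l j)" unfolding TT_def
        by (rule swap_wt[OF a, where B=1]) (use mpow_nn mpow_le1 j in \<open>auto simp: abs_le_iff\<close>)
      finally show "(\<Sum>t. a * (1 - a) ^ t * vecmat_pow M \<nu> Q t j) = (\<Sum>l\<in>M. \<nu> l * TT a l j)" .
    qed simp
    have "((\<lambda>a. \<Sum>l\<in>M. \<nu> l * TT a l j) \<longlongrightarrow> (\<Sum>l\<in>M. \<nu> l * P l j)) (at_right 0)"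
      using P j by (intro tendsto_intros) auto
    then have "((\<lambda>a. (\<Sum>t. a * (1 - a) ^ t * vecmat_pow M \<nu> Q t j)) \<longlongrightarrow> (\<Sum>l\<in>M. \<nu> l * P l j)) (at_right 0)"
      using tendsto_cong[OF ev] by blast
    then show ?thesis unfolding rho_def by (intro tendsto_Lim) auto
  qed
  have "(\<Sum>i\<in>M. rho M \<nu> Q i * Q i j) = (\<Sum>i\<in>M. \<Sum>l\<in>M. \<nu> l * P l i * Q i j)"
    using rj by (simp add: sum_distrib_right)
  also have "\<dots> = (\<Sum>l\<in>M. \<Sum>i\<in>M. \<nu> l * P l i * Q i j)" by (rule sum.swap)
  also have "\<dots> = (\<Sum>l\<in>M. \<nu> l * (\<Sum>i\<in>M. P l i * Q i j))" by (simp add: sum_distrib_left mult.assoc)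
  also have "\<dots> = (\<Sum>l\<in>M. \<nu> l * P l j)" using Pst j by simp
  also have "\<dots> = rho M \<nu> Q j" using rj j by simp
  finally show ?thesis .
qed

end


lemma rho_of_stationary:
  assumes finN: "finite N" and st: "\<forall>j\<in>N. (\<Sum>i\<in>N. \<nu> i * Q i j) = \<nu> j" and j: "j \<in> N"
  shows "rho N \<nu> Q j = \<nu> j"
proof -
  have vp: "\<forall>j\<in>N. vecmat_pow N \<nu> Q t j = \<nu> j" for t
  proof (induction t)
    case 0
    show ?case
    proof
      fix j assume j: "j \<in> N"
      have "vecmat_pow N \<nu> Q 0 j = (\<Sum>i\<in>N. if i = j then \<nu> i else 0)"
        unfolding vecmat_pow_def by (intro sum.cong) auto
      then show "vecmat_pow N \<nu> Q 0 j = \<nu> j" using j finN by simp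
    qed
  next
    case (Suc t)
    show ?case
    proof
      fix j assume j: "j \<in> N"
      have "vecmat_pow N \<nu> Q (Suc t) j = (\<Sum>i\<in>N. \<Sum>k\<in>N. \<nu> i * mpow N Q t i k * Q k j)"
        unfolding vecmat_pow_def by (simp add: sum_distrib_left mult.assoc)
      also have "\<dots> = (\<Sum>k\<in>N. \<Sum>i\<in>N. \<nu> i * mpow N Q t i k * Q k j)" by (rule sum.swap)
      also have "\<dots> = (\<Sum>k\<in>N. vecmat_pow N \<nu> Q t k * Q k j)"
        unfolding vecmat_pow_def by (simp add: sum_distrib_right)
      also have "\<dots> = (\<Sum>k\<in>N. \<nu> k * Q k j)" using Suc by simp
      also have "\<dots> = \<nu> j" using st j by simp
      finally show "vecmat_pow N \<nu> Q (Suc t) j = \<nu> j" .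
    qed
  qed
  have ev: "eventually (\<lambda>a. (\<Sum>t. a * (1 - a) ^ t * vecmat_pow N \<nu> Q t j) = \<nu> j) (at_right (0::real))"
    unfolding eventually_at_right_field
  proof (intro exI[of _ 1] conjI allI impI)
    fix a :: real assume a: "0 < a" "a < 1"
    have "(\<Sum>t. a * (1 - a) ^ t * vecmat_pow N \<nu> Q t j) = (\<Sum>t. a * (1 - a) ^ t * \<nu> j)"
      using vp j by simp
    also have "\<dots> = \<nu> j"
    proof -
      have "(\<lambda>t. (1 - a) ^ t) sums (1 / (1 - (1 - a)))" using a by (intro geometric_sums) auto
      then have "(\<lambda>t. (1 - a) ^ t * (a * \<nu> j)) sums (1 / (1 - (1 - a)) * (a * \<nu> j))" by (rule sums_mult2)
      then show ?thesis using a by (simp add: sums_unique[symmetric] mult_ac)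
    qed
    finally show "(\<Sum>t. a * (1 - a) ^ t * vecmat_pow N \<nu> Q t j) = \<nu> j" .
  qed simp
  have "((\<lambda>a. (\<Sum>t. a * (1 - a) ^ t * vecmat_pow N \<nu> Q t j)) \<longlongrightarrow> \<nu> j) (at_right 0)"
    using tendsto_cong[OF ev] by simp
  then show ?thesis unfolding rho_def by (intro tendsto_Lim) auto
qed

lemma zip_card_snd:
  assumes "length xs = length ys" "distinct ys"
  shows "card {i. (i, j) \<in> set (zip xs ys)} = (if j \<in> set ys then 1 else 0)"
proof (cases "j \<in> set ys")
  case True
  then obtain n where n: "n < length ys" "ys ! n = j" by (auto simp: in_set_conv_nth)
  have "{i. (i, j) \<in> set (zip xs ys)} = {xs ! n}"
  proof (intro set_eqI iffI)
    fix i assume "i \<in> {i. (i, j) \<in> set (zip xs ys)}"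
    then obtain m where m: "m < length xs" "m < length ys" "xs ! m = i" "ys ! m = j"
      by (auto simp: in_set_zip)
    then have "m = n" using n assms(2) nth_eq_iff_index_eq by metis
    then show "i \<in> {xs ! n}" using m by simp
  next
    fix i assume "i \<in> {xs ! n}"
    then show "i \<in> {i. (i, j) \<in> set (zip xs ys)}" using n assms(1) by (auto simp: in_set_zip)
  qed
  then show ?thesis using True by simp
next
  case False
  then have "{i. (i, j) \<in> set (zip xs ys)} = {}" by (auto dest: set_zip_rightD)
  then show ?thesis using False by simp
qed

lemma zip_card_fst:
  assumes "length xs = length ys" "distinct xs"
  shows "card {i. (j, i) \<in> set (zip xs ys)} = (if j \<in> set xs then 1 else 0)"
proof (cases "j \<in> set xs")
  case True
  then obtain n where n: "n < length xs" "xs ! n = j" by (auto simp: in_set_conv_nth)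
  have "{i. (j, i) \<in> set (zip xs ys)} = {ys ! n}"
  proof (intro set_eqI iffI)
    fix i assume "i \<in> {i. (j, i) \<in> set (zip xs ys)}"
    then obtain m where m: "m < length xs" "m < length ys" "xs ! m = j" "ys ! m = i"
      by (auto simp: in_set_zip)
    then have "m = n" using n assms(2) nth_eq_iff_index_eq by metis
    then show "i \<in> {ys ! n}" using m by simp
  next
    fix i assume "i \<in> {ys ! n}"
    then show "i \<in> {i. (j, i) \<in> set (zip xs ys)}" using n assms(1) by (auto simp: in_set_zip)
  qed
  then show ?thesis using True by simp
next
  case False
  then have "{i. (j, i) \<in> set (zip xs ys)} = {}" by (auto dest: set_zip_leftD)
  then show ?thesis using False by simp
qed

lemma cycle_in_out:
  assumes "xs \<noteq> []" "distinct xs"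
  shows "card {i. (i, j) \<in> cycle_pairs xs} = card {i. (j, i) \<in> cycle_pairs xs}"
proof -
  have r: "tl xs @ [hd xs] = rotate1 xs" using rotate1_hd_tl[OF assms(1)] by simp
  have l: "length xs = length (rotate1 xs)" by simp
  show ?thesis unfolding cycle_pairs_def r
    using zip_card_snd[OF l] zip_card_fst[OF l] assms(2) by simp
qed

lemma cycle_pairs_sub: "cycle_pairs xs \<subseteq> set xs \<times> set xs"
proof
  fix z assume z: "z \<in> cycle_pairs xs"
  obtain a b where zab: "z = (a, b)" by (cases z)
  have a: "a \<in> set xs" using z zab unfolding cycle_pairs_def by (auto dest: set_zip_leftD)
  then have ne: "xs \<noteq> []" by auto
  have "b \<in> set (tl xs @ [hd xs])" using z zab unfolding cycle_pairs_def by (auto dest: set_zip_rightD)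
  moreover have "set (tl xs @ [hd xs]) \<subseteq> set xs" using ne by (cases xs) auto
  ultimately show "z \<in> set xs \<times> set xs" using a zab by auto
qed

lemma cycle_pairs_map:
  assumes "0 < k" "g k = g 0"
  shows "cycle_pairs (map g [0..<k]) = (\<lambda>t. (g t, g (Suc t))) ` {0..<k}"
proof -
  have "tl (map g [0..<k]) @ [hd (map g [0..<k])] = map g [1..<k] @ [g k]"
    using assms by (simp add: upt_conv_Cons map_tl)
  also have "\<dots> = map g ([1..<k] @ [k])" by simp
  also have "\<dots> = map g [1..<Suc k]" using assms upt_Suc_append[of 1 k] by simp
  also have "\<dots> = map g (map Suc [0..<k])" using map_Suc_upt[of 0 k] by simp
  also have "\<dots> = map (g \<circ> Suc) [0..<k]" by simp
  finally have e: "tl (map g [0..<k]) @ [hd (map g [0..<k])] = map (g \<circ> Suc) [0..<k]" .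
  show ?thesis unfolding cycle_pairs_def e zip_map_map zip_same_conv_map by auto
qed

lemma func_cycle:
  assumes finA: "finite A" and sA: "\<forall>u\<in>A. s u \<in> A" and y0: "y0 \<in> A"
  shows "\<exists>y\<in>A. \<exists>k>0. (s ^^ k) y = y \<and> distinct (map (\<lambda>t. (s ^^ t) y) [0..<k])"
proof -
  have inA: "(s ^^ n) u \<in> A" if "u \<in> A" for n u using that sA by (induction n) auto
  define g where "g n = (s ^^ n) y0" for n
  have "\<not> inj_on g {..card A}"
  proof
    assume "inj_on g {..card A}"
    moreover have "g ` {..card A} \<subseteq> A" using inA y0 g_def by auto
    ultimately have "card {..card A} \<le> card A" using card_inj_on_le finA by blast
    then show False by simp
  qed
  then obtain i j where ij: "i < j" "g i = g j"
    unfolding inj_on_def by (metis linorder_neqE_nat)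
  define y where "y = g i"
  have yA: "y \<in> A" using inA y0 y_def g_def by simp
  have "(s ^^ (j - i)) y = y"
    using ij unfolding y_def g_def by (metis comp_apply funpow_add le_add_diff_inverse2 less_imp_le)
  then have ex: "\<exists>k. 0 < k \<and> (s ^^ k) y = y" using ij by (intro exI[of _ "j - i"]) auto
  define k where "k = (LEAST k. 0 < k \<and> (s ^^ k) y = y)"
  have k: "0 < k" "(s ^^ k) y = y" using LeastI_ex[OF ex] k_def by auto
  have kmin: "\<not> (0 < m \<and> (s ^^ m) y = y)" if "m < k" for m
    using not_less_Least[of m "\<lambda>k. 0 < k \<and> (s ^^ k) y = y"] that k_def by blast
  have "distinct (map (\<lambda>t. (s ^^ t) y) [0..<k])"
  proof (rule ccontr)
    assume "\<not> ?thesis"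
    then obtain a b where ab: "a < b" "b < k" "(s ^^ a) y = (s ^^ b) y"
      unfolding distinct_conv_nth by (auto, metis linorder_neqE_nat)
    have "(s ^^ (k - b + a)) y = (s ^^ (k - b)) ((s ^^ a) y)" by (simp add: funpow_add)
    also have "\<dots> = (s ^^ (k - b)) ((s ^^ b) y)" using ab by simp
    also have "\<dots> = (s ^^ k) y"
    proof -
      have "k = (k - b) + b" using ab by simp
      then show ?thesis by (metis comp_apply funpow_add)
    qed
    also have "\<dots> = y" using k by simp
    finally have "(s ^^ (k - b + a)) y = y" .
    moreover have "0 < k - b + a" "k - b + a < k" using ab by auto
    ultimately show False using kmin by blast
  qed
  then show ?thesis using yA k by blast
qed



lemma p_props:
  assumes "stoch_choice X p" "menu X N"
  shows "\<And>i. i \<in> X \<Longrightarrow> 0 \<le> p i N" "\<And>i. i \<in> X \<Longrightarrow> p i N \<le> 1" "(\<Sum>i\<in>N. p i N) = 1"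
  using assms unfolding stoch_choice_def by auto

lemma p_bin:
  assumes "stoch_choice X p" "i \<in> X" "j \<in> X" "i \<noteq> j"
  shows "p i {i, j} + p j {i, j} = 1"
proof -
  have "menu X {i, j}" using assms unfolding menu_def by auto
  then have "(\<Sum>k\<in>{i, j}. p k {i, j}) = 1" by (rule p_props(3)[OF assms(1)])
  then show ?thesis using assms(4) by simp
qed

lemma MSC_nn: "MSC X Q \<nu> \<Longrightarrow> menu X N \<Longrightarrow> i \<in> N \<Longrightarrow> j \<in> N \<Longrightarrow> 0 \<le> Q N i j"
  unfolding MSC_def by blast
lemma MSC_A2: "MSC X Q \<nu> \<Longrightarrow> menu X N \<Longrightarrow> i \<in> N \<Longrightarrow> j \<in> N \<Longrightarrow> i \<noteq> j \<Longrightarrow> Q {i, j} i j = 0 \<Longrightarrow> Q {i, j} j i > 0"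
  unfolding MSC_def by blast
lemma MSC_A3: "MSC X Q \<nu> \<Longrightarrow> menu X N \<Longrightarrow> i \<in> N \<Longrightarrow> j \<in> N \<Longrightarrow> i \<noteq> j \<Longrightarrow> Q {i, j} i j * Q N j i = Q {i, j} j i * Q N i j"
  unfolding MSC_def by blast
lemma MSC_diag: "MSC X Q \<nu> \<Longrightarrow> menu X N \<Longrightarrow> i \<in> N \<Longrightarrow> Q N i i = 1 - (\<Sum>k\<in>N - {i}. Q N i k)"
  unfolding MSC_def by blast

lemma rat_D:
  assumes "rationalizes X p Q \<nu>" "menu X N" "i \<in> N"
  shows "p i N = rho N (\<nu> N) (Q N) i"
  using assms(1) unfolding rationalizes_def using assms(2,3) by simp

lemma MSC_row:
  assumes "MSC X Q \<nu>" "menu X N" "finite X" "i \<in> N"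
  shows "(\<Sum>j\<in>N. Q N i j) = 1"
proof -
  have fin: "finite N" using assms(2,3) unfolding menu_def using finite_subset by blast
  have "Q N i i = 1 - (\<Sum>k\<in>N - {i}. Q N i k)" by (rule MSC_diag[OF assms(1,2,4)])
  moreover have "(\<Sum>j\<in>N. Q N i j) = Q N i i + (\<Sum>j\<in>N - {i}. Q N i j)"
    using sum.remove[OF fin assms(4), of "Q N i"] .
  ultimately show ?thesis by linarith
qed

lemma MSC_stat:
  assumes "MSC X Q \<nu>" "rationalizes X p Q \<nu>" "finite X" "menu X N" "j \<in> N"
  shows "(\<Sum>i\<in>N. p i N * Q N i j) = p j N"
proof -
  have fin: "finite N" using assms(3,4) unfolding menu_def using finite_subset by blast
  have nn: "\<And>i j. i \<in> N \<Longrightarrow> j \<in> N \<Longrightarrow> 0 \<le> Q N i j" by (rule MSC_nn[OF assms(1,4)])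
  have row: "\<And>i. i \<in> N \<Longrightarrow> (\<Sum>j\<in>N. Q N i j) = 1" using MSC_row[OF assms(1) assms(4) assms(3)] .
  have r: "\<And>i. i \<in> N \<Longrightarrow> p i N = rho N (\<nu> N) (Q N) i" using rat_D[OF assms(2,4)] .
  have "(\<Sum>i\<in>N. p i N * Q N i j) = (\<Sum>i\<in>N. rho N (\<nu> N) (Q N) i * Q N i j)"
    by (rule sum.cong[OF refl]) (simp add: r)
  also have "\<dots> = rho N (\<nu> N) (Q N) j"
    by (rule rho_stationary[OF fin nn row assms(5)])
  also have "\<dots> = p j N" using r[OF assms(5)] by simp
  finally show ?thesis .
qed

lemma delta_swap: "delta p M j i = - delta p M i j"
  unfolding delta_def by (simp add: insert_commute)

lemma delta_self: "delta p M i i = 0"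
  unfolding delta_def by simp

lemma flow_delta:
  assumes MSC: "MSC X Q \<nu>" and rat: "rationalizes X p Q \<nu>" and finX: "finite X"
    and sc: "stoch_choice X p" and M: "menu X M" and ij: "i \<in> M" "j \<in> M" "i \<noteq> j"
  shows "\<exists>lam \<ge> 0. p i M * Q M i j - p j M * Q M j i = lam * delta p M i j"
proof -
  have MX: "M \<subseteq> X" using M unfolding menu_def by auto
  have B: "menu X {i, j}" using ij MX unfolding menu_def by auto
  define a where "a = Q {i, j} i j"
  define b where "b = Q {i, j} j i"
  define x where "x = p i {i, j}"
  define y where "y = p j {i, j}"
  have A2: "a = 0 \<longrightarrow> b > 0" using MSC_A2[OF MSC M ij] unfolding a_def b_def by blast
  have A3: "a * Q M j i = b * Q M i j" using MSC_A3[OF MSC M ij] unfolding a_def b_def .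
  have ab0: "0 \<le> a" "0 \<le> b" using MSC_nn[OF MSC B] unfolding a_def b_def by auto
  have nnM: "0 \<le> Q M i j" "0 \<le> Q M j i" using MSC_nn[OF MSC M] ij by auto
  have xy: "x + y = 1" unfolding x_def y_def using ij MX by (intro p_bin[OF sc]) auto
  have xy0: "0 \<le> x" "0 \<le> y" using p_props(1)[OF sc B] ij MX unfolding x_def y_def by auto
  have st: "(\<Sum>k\<in>{i, j}. p k {i, j} * Q {i, j} k j) = p j {i, j}"
    using MSC_stat[OF MSC rat finX B] by simp
  have rowj: "(\<Sum>k\<in>{i, j}. Q {i, j} j k) = 1" using MSC_row[OF MSC B finX] by simp
  have bal: "x * a = y * b"
  proof -
    have "x * a + y * Q {i, j} j j = y" using st ij unfolding x_def y_def a_def by simp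
    moreover have "b + Q {i, j} j j = 1" using rowj ij unfolding b_def by simp
    then have "Q {i, j} j j = 1 - b" by linarith
    ultimately have "x * a + y * (1 - b) = y" by simp
    then show ?thesis by (simp add: algebra_simps)
  qed
  have dl: "delta p M i j = p i M * y - x * p j M" unfolding delta_def x_def y_def by simp
  show ?thesis
  proof (cases "b > 0")
    case True
    have "x \<noteq> 0"
    proof
      assume "x = 0" then have "y = 1" using xy by simp
      then show False using bal True \<open>x = 0\<close> by simp
    qed
    then have xp: "x > 0" using xy0 by simp
    have "b * Q M i j = a * Q M j i" using A3 by simp
    then have "x * (b * Q M i j) = x * a * Q M j i" by simp
    also have "\<dots> = y * b * Q M j i" using bal by simp
    finally have "b * (x * Q M i j) = b * (y * Q M j i)" by (simp add: mult_ac)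
    then have xq: "x * Q M i j = y * Q M j i" using True by simp
    have "x * (p i M * Q M i j - p j M * Q M j i) = Q M j i * delta p M i j"
      unfolding dl using xq by (simp add: algebra_simps)
    then have e1: "p i M * Q M i j - p j M * Q M j i = (Q M j i / x) * delta p M i j"
      using xp by (simp add: field_simps)
    have e2: "Q M j i / x \<ge> 0" using nnM xp by simp
    show ?thesis by (rule exI[of _ "Q M j i / x"], rule conjI[OF e2 e1])
  next
    case False
    then have b0: "b = 0" using ab0 by simp
    then have ap: "a > 0" using A2 ab0 by auto
    have qji: "Q M j i = 0" using A3 b0 ap by simp
    have x0: "x = 0" using bal b0 ap by simp
    then have y1: "y = 1" using xy by simp
    have e1: "p i M * Q M i j - p j M * Q M j i = Q M i j * delta p M i j"
      unfolding dl qji x0 y1 by simp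
    show ?thesis by (rule exI[of _ "Q M i j"], rule conjI[OF nnM(1) e1])
  qed
qed


lemma suff:
  assumes finX: "finite X" and sc: "stoch_choice X p" and M: "menu X M"
    and MSC: "MSC X Q \<nu>" and rat: "rationalizes X p Q \<nu>"
    and H: "\<forall>xs. xs \<noteq> [] \<and> distinct xs \<and> set xs \<subseteq> M \<and> sign_consistent p M xs \<longrightarrow>
        (\<forall>(k, l)\<in>cycle_pairs xs. delta p M k l = 0)"
  shows "reversible M Q \<nu>"
proof -
  have MX: "M \<subseteq> X" using M unfolding menu_def by auto
  have finM: "finite M" using finX MX finite_subset by blast
  define f where "f i j = p i M * Q M i j - p j M * Q M j i" for i j
  have fanti: "f j i = - f i j" for i j unfolding f_def by simp
  have fself: "f i i = 0" for i unfolding f_def by simp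
  have div: "(\<Sum>i\<in>M. f i j) = 0" if j: "j \<in> M" for j
  proof -
    have "(\<Sum>i\<in>M. f i j) = (\<Sum>i\<in>M. p i M * Q M i j) - p j M * (\<Sum>i\<in>M. Q M j i)"
      unfolding f_def by (simp add: sum_subtractf sum_distrib_left)
    also have "\<dots> = 0" using MSC_stat[OF MSC rat finX M j] MSC_row[OF MSC M finX j] by simp
    finally show ?thesis .
  qed
  have div2: "(\<Sum>k\<in>M. f j k) = 0" if j: "j \<in> M" for j
  proof -
    have "(\<Sum>k\<in>M. f j k) = (\<Sum>k\<in>M. - f k j)" by (rule sum.cong[OF refl]) (rule fanti)
    also have "\<dots> = - (\<Sum>k\<in>M. f k j)" by (simp add: sum_negf)
    finally show ?thesis using div[OF j] by simp
  qed
  have fdel: "f i j > 0 \<Longrightarrow> delta p M i j > 0" if ij: "i \<in> M" "j \<in> M" for i j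
  proof -
    assume fp: "f i j > 0"
    then have ne: "i \<noteq> j" using fself by auto
    have "\<exists>lam\<ge>0. f i j = lam * delta p M i j" unfolding f_def by (rule flow_delta[OF MSC rat finX sc M ij ne])
    then obtain lam where lam: "lam \<ge> 0" "f i j = lam * delta p M i j" by (elim exE conjE)
    show ?thesis
    proof (rule ccontr)
      assume "\<not> delta p M i j > 0"
      then have "lam * delta p M i j \<le> 0" using lam(1) by (simp add: mult_nonneg_nonpos)
      then show False using fp lam(2) by simp
    qed
  qed
  have allzero: "\<forall>i\<in>M. \<forall>j\<in>M. f i j = 0"
  proof (rule ccontr)
    assume "\<not> ?thesis"
    then obtain i0 j0 where ij0: "i0 \<in> M" "j0 \<in> M" "f i0 j0 \<noteq> 0" by blast
    have "\<exists>i\<in>M. \<exists>j\<in>M. f i j > 0"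
    proof (cases "f i0 j0 > 0")
      case True then show ?thesis using ij0 by blast
    next
      case False then have "f j0 i0 > 0" using ij0 fanti[of j0 i0] by simp
      then show ?thesis using ij0 by blast
    qed
    then obtain i1 j1 where ij1: "i1 \<in> M" "j1 \<in> M" "f i1 j1 > 0" by blast
    define A where "A = {u\<in>M. \<exists>x\<in>M. f x u > 0}"
    have succ: "\<exists>v\<in>M. f u v > 0" if u: "u \<in> A" for u
    proof (rule ccontr)
      assume "\<not> ?thesis"
      then have le: "\<forall>v\<in>M. f u v \<le> 0" by auto
      obtain x where x: "x \<in> M" "f x u > 0" using u unfolding A_def by blast
      have uM: "u \<in> M" using u unfolding A_def by blast
      have "(\<Sum>v\<in>M. f u v) < 0"
      proof -
        have "(\<Sum>v\<in>M. f u v) = f u x + (\<Sum>v\<in>M - {x}. f u v)" using sum.remove[OF finM x(1)] .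
        moreover have "(\<Sum>v\<in>M - {x}. f u v) \<le> 0" using le by (intro sum_nonpos) auto
        moreover have "f u x < 0" using x fanti[of u x] by simp
        ultimately show ?thesis by simp
      qed
      then show False using div2[OF uM] by simp
    qed
    define s where "s u = (SOME v. v \<in> M \<and> f u v > 0)" for u
    have s: "s u \<in> M \<and> f u (s u) > 0" if "u \<in> A" for u
      unfolding s_def using someI_ex[OF succ[OF that, unfolded Bex_def]] .
    have sA: "\<forall>u\<in>A. s u \<in> A" using s unfolding A_def by blast
    have j1A: "j1 \<in> A" using ij1 unfolding A_def by blast
    have finA: "finite A" using finM unfolding A_def by simp
    from func_cycle[OF finA sA j1A]
    obtain y k where yk: "y \<in> A" "0 < k" "(s ^^ k) y = y" "distinct (map (\<lambda>t. (s ^^ t) y) [0..<k])"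
      by (elim bexE exE conjE)
    define g where "g t = (s ^^ t) y" for t
    have gA: "g t \<in> A" for t unfolding g_def using yk(1) sA by (induction t) auto
    have gS: "g (Suc t) = s (g t)" for t unfolding g_def by simp
    define xs where "xs = map g [0..<k]"
    have cp: "cycle_pairs xs = (\<lambda>t. (g t, g (Suc t))) ` {0..<k}"
      unfolding xs_def by (rule cycle_pairs_map) (use yk in \<open>auto simp: g_def\<close>)
    have dpos: "delta p M a b > 0" if ab: "(a, b) \<in> cycle_pairs xs" for a b
    proof -
      obtain t where "a = g t" "b = g (Suc t)" using ab cp by auto
      then have "b = s a" "a \<in> A" using gS gA by auto
      then have "f a b > 0" "a \<in> M" "b \<in> M" using s unfolding A_def by auto
      then show ?thesis using fdel by simp
    qed
    have "xs \<noteq> []" using yk(2) unfolding xs_def by simp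
    moreover have "distinct xs" using yk(4) unfolding xs_def g_def by simp
    moreover have "set xs \<subseteq> M" using gA unfolding xs_def A_def by auto
    moreover have "sign_consistent p M xs"
      unfolding sign_consistent_def using dpos by auto
    ultimately have "xs \<noteq> [] \<and> distinct xs \<and> set xs \<subseteq> M \<and> sign_consistent p M xs" by simp
    then have z: "\<forall>(a, b)\<in>cycle_pairs xs. delta p M a b = 0" by (rule mp[OF spec[of _ xs, OF H]])
    have mem: "(g 0, g (Suc 0)) \<in> cycle_pairs xs" using cp yk(2) by auto
    have "delta p M (g 0) (g (Suc 0)) = 0" using bspec[OF z mem] by simp
    then show False using dpos[OF mem] by simp
  qed
  show ?thesis unfolding reversible_def
  proof (intro ballI)
    fix i j assume ij: "i \<in> M" "j \<in> M"
    have r: "\<And>i. i \<in> M \<Longrightarrow> p i M = rho M (\<nu> M) (Q M) i" using rat_D[OF rat M] .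
    show "Q M j i * rho M (\<nu> M) (Q M) j = rho M (\<nu> M) (Q M) i * Q M i j"
    proof -
      have "f i j = 0" using allzero ij by simp
      then have "p i M * Q M i j = p j M * Q M j i" unfolding f_def by simp
      then show ?thesis using r[OF ij(1)] r[OF ij(2)] by (simp add: mult.commute)
    qed
  qed
qed



lemma sum_if_const:
  assumes "finite A"
  shows "(\<Sum>x\<in>A. if P x then c else 0) = c * real (card {x\<in>A. P x})"
proof -
  have "(\<Sum>x\<in>A. if P x then c else 0) = (\<Sum>x\<in>{x\<in>A. P x}. c)"
    using sum.inter_filter[OF assms, of "\<lambda>_. c" P] by simp
  then show ?thesis by simp
qed

lemma bin_part_le:
  assumes "finite N" "i \<in> N"
  shows "(\<Sum>k\<in>N - {i}. (if N = {i, k} then 1/2 else 0::real)) \<le> 1/2"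
proof (cases "\<exists>k0. k0 \<noteq> i \<and> N = {i, k0}")
  case True
  then obtain k0 where k0: "k0 \<noteq> i" "N = {i, k0}" by blast
  then have "N - {i} = {k0}" by auto
  then show ?thesis using k0 by simp
next
  case False
  have "(\<Sum>k\<in>N - {i}. (if N = {i, k} then 1/2 else 0::real)) = (\<Sum>k\<in>N - {i}. 0)"
  proof (rule sum.cong[OF refl])
    fix k assume "k \<in> N - {i}"
    then show "(if N = {i, k} then 1/2 else 0::real) = 0" using False by auto
  qed
  then show ?thesis by simp
qed

lemma necc:
  assumes finX: "finite X" and sc: "stoch_choice X p" and M: "menu X M"
    and R: "\<forall>Q \<nu>. MSC X Q \<nu> \<and> rationalizes X p Q \<nu> \<longrightarrow> reversible M Q \<nu>"
    and xs: "xs \<noteq> []" "distinct xs" "set xs \<subseteq> M" "sign_consistent p M xs"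
    and ab: "(a, b) \<in> cycle_pairs xs"
  shows "delta p M a b = 0"
proof (rule ccontr)
  assume dab: "delta p M a b \<noteq> 0"
  have MX: "M \<subseteq> X" using M unfolding menu_def by auto
  have finM: "finite M" using finX MX finite_subset by blast
  define CP where "CP = cycle_pairs xs"
  have CPM: "(i, j) \<in> CP \<Longrightarrow> i \<in> M \<and> j \<in> M" for i j
    using cycle_pairs_sub[of xs] xs(3) unfolding CP_def by blast
  define s0 where "s0 = sgn (delta p M a b)"
  have sgnCP: "sgn (delta p M i j) = s0" if "(i, j) \<in> CP" for i j
    using xs(4) that ab unfolding sign_consistent_def CP_def s0_def by fastforce
  have s0nz: "s0 \<noteq> 0" using dab unfolding s0_def by (simp add: sgn_0_0)
  have dnz: "delta p M i j \<noteq> 0" if "(i, j) \<in> CP" for i j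
    using sgnCP[OF that] s0nz by auto
  define h where "h i j = (if (i, j) \<in> CP then 1 / \<bar>delta p M i j\<bar> else 0)" for i j
  have hd: "h i j * delta p M i j = (if (i, j) \<in> CP then s0 else 0)" for i j
  proof (cases "(i, j) \<in> CP")
    case True
    have "h i j * delta p M i j = delta p M i j / \<bar>delta p M i j\<bar>" using True unfolding h_def by simp
    also have "\<dots> = sgn (delta p M i j)" by (rule real_sgn_eq[symmetric])
    finally show ?thesis using True sgnCP by simp
  qed (simp add: h_def)
  have hnn: "0 \<le> h i j" for i j unfolding h_def by simp
  define g where "g i j = h i j + h j i" for i j
  have gnn: "0 \<le> g i j" for i j unfolding g_def using hnn by (simp add: add_nonneg_nonneg)
  have gsym: "g i j = g j i" for i j unfolding g_def by simp
  define G where "G = (\<Sum>i\<in>M. \<Sum>k\<in>M. g i k)"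
  have Gnn: "0 \<le> G" unfolding G_def using gnn by (simp add: sum_nonneg)
  have gG: "(\<Sum>k\<in>M. g i k) \<le> G" if "i \<in> M" for i
    unfolding G_def using that finM gnn by (intro member_le_sum) (auto intro: sum_nonneg)
  define \<epsilon> where "\<epsilon> = 1 / (4 * (G + 1))"
  have epos: "0 < \<epsilon>" unfolding \<epsilon>_def using Gnn by simp
  have eG: "\<epsilon> * G \<le> 1/4" unfolding \<epsilon>_def using Gnn by (simp add: field_simps)
  define w where "w N i j = (if N = {i, j} then 1/2 else 0) + (if N = M then \<epsilon> * g i j else 0)" for N i j
  have wnn: "0 \<le> w N i j" for N i j unfolding w_def using epos gnn by simp
  have wsym: "w N j i = w N i j" for N i j unfolding w_def using gsym by (simp add: insert_commute)
  have wbin: "1/2 \<le> w {i, j} i j" for i j unfolding w_def using epos gnn by simp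
  define off where "off N i j = w N i j * p j {i, j}" for N i j
  define Qc where "Qc N i j = (if i = j then 1 - (\<Sum>k\<in>N - {i}. off N i k) else off N i j)" for N i j
  define \<nu>c where "\<nu>c N i = p i N" for N i

  have ddiag: "delta p N i i = 0" for N i by (rule delta_self)
  have gdiv: "(\<Sum>i\<in>M. g i j * delta p M i j) = 0" if j: "j \<in> M" for j
  proof -
    have e1: "(\<Sum>i\<in>M. h i j * delta p M i j) = s0 * real (card {i\<in>M. (i, j) \<in> CP})"
      unfolding hd by (rule sum_if_const[OF finM])
    have hd2: "h j i * delta p M i j = (if (j, i) \<in> CP then - s0 else 0)" for i
      using hd[of j i] delta_swap[of p M j i] by (simp split: if_splits)
    have e2: "(\<Sum>i\<in>M. h j i * delta p M i j) = - s0 * real (card {i\<in>M. (j, i) \<in> CP})"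
      unfolding hd2 by (rule sum_if_const[OF finM])
    have c1: "{i\<in>M. (i, j) \<in> CP} = {i. (i, j) \<in> cycle_pairs xs}" using CPM unfolding CP_def by blast
    have c2: "{i\<in>M. (j, i) \<in> CP} = {i. (j, i) \<in> cycle_pairs xs}" using CPM unfolding CP_def by blast
    have "(\<Sum>i\<in>M. g i j * delta p M i j) = (\<Sum>i\<in>M. h i j * delta p M i j) + (\<Sum>i\<in>M. h j i * delta p M i j)"
      unfolding g_def by (simp add: distrib_right sum.distrib)
    also have "\<dots> = 0" unfolding e1 e2 c1 c2 cycle_in_out[OF xs(1,2)] by simp
    finally show ?thesis .
  qed

  have stat: "(\<Sum>i\<in>N. p i N * Qc N i j) = p j N" if N: "menu X N" and j: "j \<in> N" for N j
  proof -
    have finN: "finite N" using N finX unfolding menu_def using finite_subset by blast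
    have NX: "N \<subseteq> X" using N unfolding menu_def by auto
    have trm: "p i N * off N i j - p j N * off N j i = w N i j * delta p N i j" for i
      unfolding off_def delta_def using wsym[of N j i] by (simp add: insert_commute algebra_simps)
    have t2: "w N i j * delta p N i j = (if N = M then \<epsilon> * (g i j * delta p M i j) else 0)" if "i \<noteq> j" for i
      by (cases "N = {i, j}"; cases "N = M") (simp_all add: w_def delta_def)
    have "(\<Sum>i\<in>N. p i N * Qc N i j) = p j N * Qc N j j + (\<Sum>i\<in>N - {j}. p i N * Qc N i j)"
      by (rule sum.remove[OF finN j])
    also have "(\<Sum>i\<in>N - {j}. p i N * Qc N i j) = (\<Sum>i\<in>N - {j}. p i N * off N i j)"
      by (rule sum.cong[OF refl]) (simp add: Qc_def)
    also have "p j N * Qc N j j = p j N - (\<Sum>i\<in>N - {j}. p j N * off N j i)"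
      by (simp add: Qc_def sum_distrib_left algebra_simps)
    finally have "(\<Sum>i\<in>N. p i N * Qc N i j) = p j N + (\<Sum>i\<in>N - {j}. p i N * off N i j - p j N * off N j i)"
      by (simp add: sum_subtractf)
    also have "(\<Sum>i\<in>N - {j}. p i N * off N i j - p j N * off N j i) = (\<Sum>i\<in>N - {j}. w N i j * delta p N i j)"
      by (rule sum.cong[OF refl]) (rule trm)
    also have "\<dots> = (\<Sum>i\<in>N - {j}. if N = M then \<epsilon> * (g i j * delta p M i j) else 0)"
      by (rule sum.cong[OF refl]) (rule t2, simp)
    also have "\<dots> = 0"
    proof (cases "N = M")
      case True
      have "(\<Sum>i\<in>M. g i j * delta p M i j) = g j j * delta p M j j + (\<Sum>i\<in>M - {j}. g i j * delta p M i j)"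
        using j True by (intro sum.remove[OF finM]) simp
      then have "(\<Sum>i\<in>M - {j}. g i j * delta p M i j) = 0" using gdiv[of j] j True ddiag[of M j] by simp
      then show ?thesis using True by (simp add: sum_distrib_left[symmetric])
    qed simp
    finally show ?thesis by simp
  qed

  have pnn: "0 \<le> p j {i, j}" "p j {i, j} \<le> 1" if "i \<in> X" "j \<in> X" for i j
  proof -
    have "menu X {i, j}" using that unfolding menu_def by auto
    then show "0 \<le> p j {i, j}" "p j {i, j} \<le> 1" using p_props(1,2)[OF sc] that by auto
  qed
  have offnn: "0 \<le> off N i j" if "i \<in> X" "j \<in> X" for N i j
    unfolding off_def using wnn pnn[OF that] by simp
  have offle: "off N i j \<le> w N i j" if "i \<in> X" "j \<in> X" for N i j
    unfolding off_def using wnn[of N i j] pnn[OF that] by (simp add: mult_left_le)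
  have rowsmall: "(\<Sum>k\<in>N - {i}. off N i k) \<le> 3/4" if N: "menu X N" and i: "i \<in> N" for N i
  proof -
    have finN: "finite N" using N finX unfolding menu_def using finite_subset by blast
    have NX: "N \<subseteq> X" using N unfolding menu_def by auto
    have "(\<Sum>k\<in>N - {i}. off N i k) \<le> (\<Sum>k\<in>N - {i}. w N i k)"
      using NX i by (intro sum_mono offle) auto
    also have "\<dots> = (\<Sum>k\<in>N - {i}. (if N = {i, k} then 1/2 else 0)) + (\<Sum>k\<in>N - {i}. (if N = M then \<epsilon> * g i k else 0))"
      unfolding w_def by (simp add: sum.distrib)
    also have "(\<Sum>k\<in>N - {i}. (if N = M then \<epsilon> * g i k else 0)) \<le> 1/4"
    proof (cases "N = M")
      case True
      have "(\<Sum>k\<in>M - {i}. g i k) \<le> (\<Sum>k\<in>M. g i k)"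
        using finM gnn by (intro sum_mono2) auto
      also have "\<dots> \<le> G" using gG i True by simp
      finally have "\<epsilon> * (\<Sum>k\<in>M - {i}. g i k) \<le> \<epsilon> * G" using epos by (simp add: mult_left_mono)
      then show ?thesis using True eG by (simp add: sum_distrib_left[symmetric])
    qed simp
    finally show ?thesis using bin_part_le[OF finN i] by simp
  qed
  have MSCc: "MSC X Qc \<nu>c"
    unfolding MSC_def
  proof (intro allI impI conjI ballI)
    fix N assume N: "menu X N"
    have NX: "N \<subseteq> X" using N unfolding menu_def by auto
    have diagpos: "0 < Qc N i i" if i: "i \<in> N" for i unfolding Qc_def using rowsmall[OF N i] by simp
    {
      fix i assume i: "i \<in> N"
      have "(\<Sum>k\<in>N - {i}. Qc N i k) = (\<Sum>k\<in>N - {i}. off N i k)"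
        by (rule sum.cong[OF refl]) (auto simp: Qc_def)
      then show "Qc N i i = 1 - (\<Sum>k\<in>N - {i}. Qc N i k)"
        by (simp add: Qc_def)
      show "0 < Qc N i i" by (rule diagpos[OF i])
      show "0 \<le> \<nu>c N i" unfolding \<nu>c_def using p_props(1)[OF sc N] i NX by auto
    }
    show "(\<Sum>i\<in>N. \<nu>c N i) = 1" unfolding \<nu>c_def using p_props(3)[OF sc N] .
    fix i j assume i: "i \<in> N" and j: "j \<in> N"
    show "0 \<le> Qc N i j"
    proof (cases "i = j")
      case True then show ?thesis using diagpos[OF i] by simp
    next
      case False then show ?thesis unfolding Qc_def using offnn i j NX by auto
    qed
    assume ij: "i \<noteq> j"
    have iX: "i \<in> X" and jX: "j \<in> X" using i j NX by auto
    have ji: "{j, i} = {i, j}" by (rule insert_commute)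
    {
      assume "Qc {i, j} i j = 0"
      then have "w {i, j} i j * p j {i, j} = 0" unfolding Qc_def off_def using ij by simp
      then have "p j {i, j} = 0" using wbin[of i j] by simp
      then have "p i {i, j} = 1" using p_bin[OF sc iX jX ij] by simp
      moreover have "1/2 \<le> w {i, j} j i" using wbin[of j i] ji by simp
      ultimately show "0 < Qc {i, j} j i" unfolding Qc_def off_def using ij ji by simp
    }
    show "Qc {i, j} i j * Qc N j i = Qc {i, j} j i * Qc N i j"
      unfolding Qc_def off_def using ij ji wsym[of "{i, j}" i j] wsym[of N i j] by simp
  qed
  have ratc: "rationalizes X p Qc \<nu>c"
    unfolding rationalizes_def
  proof (intro allI impI ballI)
    fix N j assume N: "menu X N" and j: "j \<in> N"
    have finN: "finite N" using N finX unfolding menu_def using finite_subset by blast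
    have "rho N (\<nu>c N) (Qc N) j = \<nu>c N j"
      by (rule rho_of_stationary[OF finN _ j]) (use stat[OF N] in \<open>simp add: \<nu>c_def\<close>)
    then show "p j N = rho N (\<nu>c N) (Qc N) j" unfolding \<nu>c_def by simp
  qed
  have rev: "reversible M Qc \<nu>c" using R MSCc ratc by blast
  have abM: "a \<in> M" "b \<in> M" using CPM[of a b] ab unfolding CP_def by auto
  have neab: "a \<noteq> b" using dab ddiag by auto
  have "Qc M b a * rho M (\<nu>c M) (Qc M) b = rho M (\<nu>c M) (Qc M) a * Qc M a b"
    using rev abM unfolding reversible_def by blast
  moreover have "rho M (\<nu>c M) (Qc M) a = p a M" "rho M (\<nu>c M) (Qc M) b = p b M"
    using rat_D[OF ratc M] abM by (simp_all)
  ultimately have "off M b a * p b M = p a M * off M a b" unfolding Qc_def using neab by simp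
  then have "w M a b * delta p M a b = 0"
    unfolding off_def delta_def using wsym[of M b a] by (simp add: insert_commute algebra_simps) argo
  moreover have "0 < w M a b"
  proof -
    have "h a b > 0" unfolding h_def using ab dab unfolding CP_def by simp
    then have "g a b > 0" unfolding g_def using hnn by (simp add: add_pos_nonneg)
    then have "\<epsilon> * g a b > 0" using epos by simp
    then show ?thesis unfolding w_def by simp
  qed
  ultimately show False using dab by simp
qed


theorem theorem1:
  fixes X :: "'a set" and p :: "'a \<Rightarrow> 'a set \<Rightarrow> real" and M :: "'a set"
  assumes "finite X"
    and "stoch_choice X p"
    and "menu X M"
  shows "(\<forall>Q \<nu>. MSC X Q \<nu> \<and> rationalizes X p Q \<nu> \<longrightarrow> reversible M Q \<nu>)
     \<longleftrightarrow>
     (\<forall>xs. xs \<noteq> [] \<and> distinct xs \<and> set xs \<subseteq> M \<and> sign_consistent p M xs \<longrightarrow>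
        (\<forall>(k, l)\<in>cycle_pairs xs. delta p M k l = 0))"
proof
  assume R: "\<forall>Q \<nu>. MSC X Q \<nu> \<and> rationalizes X p Q \<nu> \<longrightarrow> reversible M Q \<nu>"
  show "\<forall>xs. xs \<noteq> [] \<and> distinct xs \<and> set xs \<subseteq> M \<and> sign_consistent p M xs \<longrightarrow>
        (\<forall>(k, l)\<in>cycle_pairs xs. delta p M k l = 0)"
  proof (intro allI impI ballI)
    fix xs z assume H: "xs \<noteq> [] \<and> distinct xs \<and> set xs \<subseteq> M \<and> sign_consistent p M xs"
      and z: "z \<in> cycle_pairs xs"
    obtain k l where kl: "z = (k, l)" by (cases z)
    have "delta p M k l = 0"
      using H z kl by (intro necc[OF assms(1,2,3) R]) auto
    then show "case z of (k, l) \<Rightarrow> delta p M k l = 0" using kl by simp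
  qed
next
  assume H: "\<forall>xs. xs \<noteq> [] \<and> distinct xs \<and> set xs \<subseteq> M \<and> sign_consistent p M xs \<longrightarrow>
        (\<forall>(k, l)\<in>cycle_pairs xs. delta p M k l = 0)"
  show "\<forall>Q \<nu>. MSC X Q \<nu> \<and> rationalizes X p Q \<nu> \<longrightarrow> reversible M Q \<nu>"
  proof (intro allI impI)
    fix Q \<nu> assume QN: "MSC X Q \<nu> \<and> rationalizes X p Q \<nu>"
    show "reversible M Q \<nu>"
      by (rule suff[OF assms(1,2,3) conjunct1[OF QN] conjunct2[OF QN] H])
  qed
qed

end
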